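(* In the idealized setting described in the context, for the PAIR framework one has $\ell_k\ge 2\ell_{k-1}$ for every iteration $k\ge 1$.
   Context: Setting: a goal-conditioned Markov decision process with finite state space $\mathcal S$, finite action set $\mathcal A$, deterministic transitions, goal space $\mathcal G=\mathcal S$, and sparse reward $r(s,a,g)=\mathbb I\{s=g\}$. A policy is $\pi(a|s,g)$. Write $s\xrightarrow{\pi} g$ if, starting at $s_0=s$ and choosing $a_i\sim\pi(\cdot|s_i,g)$, $s_{i+1}\sim P(\cdot|s_i,a_i)$, the goal $g$ is reached ($s_t=g$ for some $t\ge 0$) with probability $1$. Let $d(s,s')$ be the minimum $t$ such that some policy reaches $s_t=s'$ from $s_0=s$ with probability $1$ ($+\infty$ if none). Let $\pi^{(k)}$ be the policy at the end of iteration $k$ ($\pi^{(0)}$ the initial policy) and $\ell_k=\sup\{\ell:\ s\xrightarrow{\pi^{(k)}} g \text{ for all } s,g \text{ with } d(s,g)\le \ell\}$. Assumptions: if $P(s'|s,a)=1$ then $\pi^{(0)}(a|s,g=s')=1$. In each iteration every state-goal pair $(s,g)$ is sampled at least once. Idealized PAIR iteration $k$: for each pair $(s,g)$, roll out $\pi^{(k-1)}$ from $s$ toward $g$; if it succeeds the trajectory is added to the dataset; otherwise task reduction selects a subgoal $s'$ maximizing $V(s,s')\cdot V(s',g)$, where $V$ is the goal-conditioned value function (equal to $1$ exactly on pairs $(x,y)$ with $x\xrightarrow{\pi^{(k-1)}}y$), executes $\pi^{(k-1)}(\cdot|\cdot,s')$ from $s$ and then $\pi^{(k-1)}(\cdot|\cdot,g)$,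 and adds the resulting successful trajectory from $s$ to $g$ if any. The supervised learning step then produces $\pi^{(k)}$ with $s\xrightarrow{\pi^{(k)}}g$ for every pair $(s,g)$ for which the dataset contains a successful trajectory from $s$ to $g$. *)

theory Defs
  imports "HOL-Probability.Probability_Mass_Function" "HOL-Library.Extended_Nat"
begin

text \<open>Deterministic goal-conditioned MDP: finite state type 's, finite action type 'a,
  transition function step s a (P(s'|s,a) = 1 iff s' = step s a).\<close>

fun reach_prob :: "('s \<Rightarrow> 'a::finite \<Rightarrow> 's) \<Rightarrow> ('s \<Rightarrow> 's \<Rightarrow> 'a pmf) \<Rightarrow> 's \<Rightarrow> nat \<Rightarrow> 's \<Rightarrow> real"
where
  "reach_prob step pol g 0 s = (if s = g then 1 else 0)"
| "reach_prob step pol g (Suc n) s =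
     (if s = g then 1 else (\<Sum>a\<in>UNIV. pmf (pol s g) a * reach_prob step pol g n (step s a)))"

definition reaches :: "('s \<Rightarrow> 'a::finite \<Rightarrow> 's) \<Rightarrow> ('s \<Rightarrow> 's \<Rightarrow> 'a pmf) \<Rightarrow> 's \<Rightarrow> 's \<Rightarrow> bool"
where
  "reaches step pol s g \<longleftrightarrow> (\<lambda>n. reach_prob step pol g n s) \<longlonglongrightarrow> 1"

fun state_prob :: "('s \<Rightarrow> 'a::finite \<Rightarrow> 's) \<Rightarrow> ('s \<Rightarrow> 'a pmf) \<Rightarrow> nat \<Rightarrow> 's \<Rightarrow> 's \<Rightarrow> real"
where
  "state_prob step p 0 s x = (if s = x then 1 else 0)"
| "state_prob step p (Suc t) s x = (\<Sum>a\<in>UNIV. pmf (p s) a * state_prob step p t (step s a) x)"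

definition dist_mdp :: "('s \<Rightarrow> 'a::finite \<Rightarrow> 's) \<Rightarrow> 's \<Rightarrow> 's \<Rightarrow> enat"
where
  "dist_mdp step s s' = Inf {enat t | t. \<exists>p. state_prob step p t s s' = 1}"

definition ell :: "('s \<Rightarrow> 'a::finite \<Rightarrow> 's) \<Rightarrow> ('s \<Rightarrow> 's \<Rightarrow> 'a pmf) \<Rightarrow> enat"
where
  "ell step pol = Sup {enat l | l. \<forall>s g. dist_mdp step s g \<le> enat l \<longrightarrow> reaches step pol s g}"

text \<open>Task-reduction execution: from s follow pol(.|.,s') until s' is reached, then
  follow pol(.|.,g); success as soon as g is visited.  Probability of success within n steps.\<close>
fun comp_prob :: "('s \<Rightarrow> 'a::finite \<Rightarrow> 's) \<Rightarrow> ('s \<Rightarrow> 's \<Rightarrow> 'a pmf) \<Rightarrow> 's \<Rightarrow> 's \<Rightarrow> nat \<Rightarrow> 's \<Rightarrow> real"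
where
  "comp_prob step pol s' g 0 x =
     (if x = g then 1 else if x = s' then reach_prob step pol g 0 x else 0)"
| "comp_prob step pol s' g (Suc n) x =
     (if x = g then 1 else if x = s' then reach_prob step pol g (Suc n) x
      else (\<Sum>a\<in>UNIV. pmf (pol x s') a * comp_prob step pol s' g n (step x a)))"

definition comp_reaches :: "('s \<Rightarrow> 'a::finite \<Rightarrow> 's) \<Rightarrow> ('s \<Rightarrow> 's \<Rightarrow> 'a pmf) \<Rightarrow> 's \<Rightarrow> 's \<Rightarrow> 's \<Rightarrow> bool"
where
  "comp_reaches step pol s s' g \<longleftrightarrow> (\<lambda>n. comp_prob step pol s' g n s) \<longlonglongrightarrow> 1"

end

theory Submission
  imports Defs
begin

lemma sum_pmf_UNIV: "(\<Sum>a\<in>(UNIV::'a::finite set). pmf p a) = 1"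
  by (rule sum_pmf_eq_1) auto

lemma reach_prob_bounds: "0 \<le> reach_prob step pol g n s \<and> reach_prob step pol g n s \<le> 1"
proof (induction n arbitrary: s)
  case 0 then show ?case by simp
next
  case (Suc n)
  have "(\<Sum>a\<in>UNIV. pmf (pol s g) a * reach_prob step pol g n (step s a)) \<le> (\<Sum>a\<in>UNIV. pmf (pol s g) a)"
    by (rule sum_mono) (use Suc in \<open>auto intro: mult_left_le simp: pmf_nonneg\<close>)
  moreover have "0 \<le> (\<Sum>a\<in>UNIV. pmf (pol s g) a * reach_prob step pol g n (step s a))"
    by (rule sum_nonneg) (use Suc in \<open>auto simp: pmf_nonneg\<close>)
  ultimately show ?case by (simp add: sum_pmf_UNIV)
qed

lemma reach_prob_mono: "reach_prob step pol g n s \<le> reach_prob step pol g (Suc n) s"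
proof (induction n arbitrary: s)
  case 0 then show ?case using reach_prob_bounds[of step pol g 0]
    by (auto intro!: sum_nonneg simp: pmf_nonneg)
next
  case (Suc n)
  show ?case
  proof (cases "s = g")
    case False
    have "(\<Sum>a\<in>UNIV. pmf (pol s g) a * reach_prob step pol g n (step s a))
       \<le> (\<Sum>a\<in>UNIV. pmf (pol s g) a * reach_prob step pol g (Suc n) (step s a))"
      by (intro sum_mono mult_left_mono Suc.IH) (simp add: pmf_nonneg)
    then show ?thesis using False by (simp only: reach_prob.simps if_False)
  qed simp
qed

lemma reach_prob_mono': "m \<le> n \<Longrightarrow> reach_prob step pol g m s \<le> reach_prob step pol g n s"
  by (induction n rule: dec_induct) (auto intro: order_trans[OF _ reach_prob_mono] simp del: reach_prob.simps)

lemma comp_prob_bounds: "0 \<le> comp_prob step pol s' g n s \<and> comp_prob step pol s' g n s \<le> 1"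
proof (induction n arbitrary: s)
  case 0 then show ?case by simp
next
  case (Suc n)
  have "(\<Sum>a\<in>UNIV. pmf (pol s s') a * comp_prob step pol s' g n (step s a)) \<le> (\<Sum>a\<in>UNIV. pmf (pol s s') a)"
    by (rule sum_mono) (use Suc in \<open>auto intro: mult_left_le simp: pmf_nonneg\<close>)
  moreover have "0 \<le> (\<Sum>a\<in>UNIV. pmf (pol s s') a * comp_prob step pol s' g n (step s a))"
    by (rule sum_nonneg) (use Suc in \<open>auto simp: pmf_nonneg\<close>)
  ultimately show ?case using reach_prob_bounds[of step pol g "Suc n"]
    by (simp add: sum_pmf_UNIV del: reach_prob.simps)
qed

lemma comp_prob_at_mid: "s' \<noteq> g \<Longrightarrow> comp_prob step pol s' g m s' = reach_prob step pol g m s'"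
  by (cases m) (simp_all del: reach_prob.simps)

lemma comp_lower:
  "reach_prob step pol s' n x * reach_prob step pol g m s' \<le> comp_prob step pol s' g (n + m) x"
proof (induction n arbitrary: x)
  case 0
  show ?case
  proof (cases "x = g")
    case True
    then show ?thesis using reach_prob_bounds[of step pol s' 0 x] reach_prob_bounds[of step pol g m s']
      comp_prob_bounds[of step pol s' g m x]
      by (cases m) (auto intro: mult_le_one)
  next
    case False
    then show ?thesis using comp_prob_at_mid[of s' g step pol m] comp_prob_bounds[of step pol s' g m x]
      by auto
  qed
next
  case (Suc n)
  consider "x = g" | "x \<noteq> g" "x = s'" | "x \<noteq> g" "x \<noteq> s'" by blast
  then show ?case
  proof cases
    case 1
    then show ?thesis using reach_prob_bounds[of step pol s' "Suc n" x] reach_prob_bounds[of step pol g m s']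
      by (simp del: reach_prob.simps) (auto intro: mult_le_one)
  next
    case 2
    have "reach_prob step pol s' (Suc n) x * reach_prob step pol g m s' \<le> reach_prob step pol g m s'"
      using reach_prob_bounds[of step pol s' "Suc n" x] reach_prob_bounds[of step pol g m s']
      by (auto intro: mult_left_le_one_le)
    also have "\<dots> \<le> reach_prob step pol g (Suc n + m) s'" by (rule reach_prob_mono') simp
    finally show ?thesis using 2 comp_prob_at_mid[of s' g step pol "Suc n + m"] by simp
  next
    case 3
    have "reach_prob step pol s' (Suc n) x * reach_prob step pol g m s'
       = (\<Sum>a\<in>UNIV. pmf (pol x s') a * (reach_prob step pol s' n (step x a) * reach_prob step pol g m s'))"
      using 3 by (simp add: sum_distrib_right mult.assoc)
    also have "\<dots> \<le> (\<Sum>a\<in>UNIV. pmf (pol x s') a * comp_prob step pol s' g (n + m) (step x a))"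
      by (intro sum_mono mult_left_mono Suc) (simp add: pmf_nonneg)
    also have "\<dots> = comp_prob step pol s' g (Suc n + m) x" using 3 by simp
    finally show ?thesis .
  qed
qed

lemma comp_reaches_lemma:
  assumes "reaches step pol s s'" "reaches step pol s' g"
  shows "comp_reaches step pol s s' g"
proof -
  have f: "filterlim (\<lambda>N::nat. N div 2) sequentially sequentially"
    unfolding filterlim_at_top eventually_sequentially
    by (intro allI, rule_tac x="2*Z" in exI) auto
  have f2: "filterlim (\<lambda>N::nat. N - N div 2) sequentially sequentially"
    unfolding filterlim_at_top eventually_sequentially
    by (intro allI, rule_tac x="2*Z" in exI) auto
  have l1: "(\<lambda>N. reach_prob step pol s' (N div 2) s) \<longlonglongrightarrow> 1"
    using filterlim_compose[OF assms(1)[unfolded reaches_def] f] by (simp add: o_def)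
  have l2: "(\<lambda>N. reach_prob step pol g (N - N div 2) s') \<longlonglongrightarrow> 1"
    using filterlim_compose[OF assms(2)[unfolded reaches_def] f2] by (simp add: o_def)
  have l: "(\<lambda>N. reach_prob step pol s' (N div 2) s * reach_prob step pol g (N - N div 2) s') \<longlonglongrightarrow> 1"
    using tendsto_mult[OF l1 l2] by simp
  show ?thesis unfolding comp_reaches_def
  proof (rule tendsto_sandwich[OF _ _ l tendsto_const])
    show "\<forall>\<^sub>F n in sequentially. reach_prob step pol s' (n div 2) s * reach_prob step pol g (n - n div 2) s'
        \<le> comp_prob step pol s' g n s"
    proof (intro always_eventually allI)
      fix n :: nat
      have "n div 2 + (n - n div 2) = n" by simp
      then show "reach_prob step pol s' (n div 2) s * reach_prob step pol g (n - n div 2) s'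
        \<le> comp_prob step pol s' g n s"
        using comp_lower[of step pol s' "n div 2" s g "n - n div 2"] by simp
    qed
    show "\<forall>\<^sub>F n in sequentially. comp_prob step pol s' g n s \<le> 1"
      by (intro always_eventually allI) (simp add: comp_prob_bounds)
  qed
qed

definition pathf :: "('s \<Rightarrow> 'a \<Rightarrow> 's) \<Rightarrow> (nat \<Rightarrow> 's) \<Rightarrow> nat \<Rightarrow> bool" where
  "pathf step x t \<longleftrightarrow> (\<forall>i<t. \<exists>a. x (Suc i) = step (x i) a)"

lemma state_prob_nonneg: "0 \<le> state_prob step p t s g"
  by (induction t arbitrary: s) (auto intro!: sum_nonneg simp: pmf_nonneg)

lemma state_prob_path:
  "state_prob step p t s g > 0 \<Longrightarrow> \<exists>x. x 0 = s \<and> x t = g \<and> pathf step x t"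
proof (induction t arbitrary: s)
  case 0
  then show ?case by (intro exI[of _ "\<lambda>_. s"]) (auto simp: pathf_def split: if_splits)
next
  case (Suc t)
  have "\<exists>a. pmf (p s) a * state_prob step p t (step s a) g > 0"
  proof (rule ccontr)
    assume "\<not> ?thesis"
    then have "(\<Sum>a\<in>UNIV. pmf (p s) a * state_prob step p t (step s a) g) \<le> 0"
      by (intro sum_nonpos) (simp add: not_less)
    with Suc.prems show False by simp
  qed
  then obtain a where "pmf (p s) a * state_prob step p t (step s a) g > 0" by blast
  then have "state_prob step p t (step s a) g > 0"
    using pmf_nonneg[of "p s" a] by (simp add: zero_less_mult_iff)
  from Suc.IH[OF this] obtain y where y: "y 0 = step s a" "y t = g" "pathf step y t" by blast
  define x where "x = (\<lambda>i. case i of 0 \<Rightarrow> s | Suc j \<Rightarrow> y j)"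
  have "pathf step x (Suc t)"
    unfolding pathf_def
  proof (intro allI impI)
    fix i assume "i < Suc t"
    then show "\<exists>a. x (Suc i) = step (x i) a"
      using y(1,3) unfolding pathf_def x_def
      by (cases i) auto
  qed
  then show ?case using y by (intro exI[of _ x]) (simp add: x_def)
qed

lemma path_dist_inj:
  assumes "pathf step x t" "inj_on x {..t}"
  shows "dist_mdp step (x 0) (x t) \<le> enat t"
proof -
  obtain act where act: "\<And>i. i < t \<Longrightarrow> x (Suc i) = step (x i) (act i)"
    using assms(1) unfolding pathf_def by metis
  define p where "p = (\<lambda>y. return_pmf (act (inv_into {..<t} x y)))"
  have inj: "inj_on x {..<t}" using assms(2) by (rule inj_on_subset) auto
  have "\<forall>i. i + r = t \<longrightarrow> state_prob step p r (x i) (x t) = 1" for r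
  proof (induction r)
    case 0 then show ?case by simp
  next
    case (Suc r)
    show ?case
    proof (intro allI impI)
      fix i assume i: "i + Suc r = t"
      then have "i < t" by simp
      then have "inv_into {..<t} x (x i) = i" using inj by (simp add: inv_into_f_f)
      then have "state_prob step p (Suc r) (x i) (x t) = state_prob step p r (step (x i) (act i)) (x t)"
        by (simp add: p_def pmf_return indicator_def)
      also have "\<dots> = state_prob step p r (x (Suc i)) (x t)" using act[OF \<open>i < t\<close>] by simp
      also have "\<dots> = 1" using Suc.IH i by simp
      finally show "state_prob step p (Suc r) (x i) (x t) = 1" .
    qed
  qed
  then have "state_prob step p t (x 0) (x t) = 1" by simp
  then show ?thesis unfolding dist_mdp_def by (intro Inf_lower) blast
qed

lemma path_dist:
  "pathf step x t \<Longrightarrow> dist_mdp step (x 0) (x t) \<le> enat t"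
proof (induction t arbitrary: x rule: less_induct)
  case (less t)
  show ?case
  proof (cases "inj_on x {..t}")
    case True
    then show ?thesis using path_dist_inj less.prems by blast
  next
    case False
    then obtain i j where ij: "i < j" "j \<le> t" "x i = x j"
      unfolding inj_on_def by (metis atMost_iff linorder_neqE_nat)
    define y where "y = (\<lambda>k. if k \<le> i then x k else x (k + (j - i)))"
    have py: "pathf step y (t - (j - i))"
      unfolding pathf_def
    proof (intro allI impI)
      fix k assume k: "k < t - (j - i)"
      show "\<exists>a. y (Suc k) = step (y k) a"
      proof (cases "k < i")
        case True
        then show ?thesis using less.prems k ij unfolding pathf_def y_def by auto
      next
        case False
        have "k + (j - i) < t" using k ij by simp
        then obtain a where "x (Suc (k + (j - i))) = step (x (k + (j - i))) a"
          using less.prems unfolding pathf_def by blast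
        moreover have "y k = x (k + (j - i))" using False ij by (auto simp: y_def)
        moreover have "y (Suc k) = x (Suc (k + (j - i)))" using False ij by (auto simp: y_def)
        ultimately show ?thesis by metis
      qed
    qed
    have "y 0 = x 0" by (simp add: y_def)
    moreover have "y (t - (j - i)) = x t"
    proof (cases "t - (j - i) \<le> i")
      case True
      then have "j = t" using ij by simp
      then show ?thesis using True ij by (simp add: y_def)
    next
      case False
      then show ?thesis using ij by (simp add: y_def)
    qed
    moreover have "dist_mdp step (y 0) (y (t - (j - i))) \<le> enat (t - (j - i))"
      using less.IH[OF _ py] ij by simp
    ultimately show ?thesis using ij by (metis enat_ord_simps(1) diff_le_self order_trans)
  qed
qed

lemma dist_path:
  assumes "dist_mdp step s g \<le> enat n"
  shows "\<exists>t\<le>n. \<exists>x. x 0 = s \<and> x t = g \<and> pathf step x t"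
proof -
  let ?A = "{enat t | t. \<exists>p. state_prob step p t s g = 1}"
  have ne: "?A \<noteq> {}" using assms unfolding dist_mdp_def by (auto simp: Inf_enat_def split: if_splits)
  have eq: "Inf ?A = (LEAST y. y \<in> ?A)"
    by (rule Inf_enat_def[THEN trans]) (rule if_not_P[OF ne])
  from ne obtain y where "y \<in> ?A" by (meson ex_in_conv)
  then have "Inf ?A \<in> ?A" unfolding eq by (rule LeastI)
  then obtain t p where t: "Inf ?A = enat t" "state_prob step p t s g = 1" by blast
  have "dist_mdp step s g = enat t" using t(1) unfolding dist_mdp_def .
  then have "t \<le> n" using assms by simp
  moreover from state_prob_path[of step p t s g] t(2) obtain x where "x 0 = s \<and> x t = g \<and> pathf step x t"
    by auto
  ultimately show ?thesis by blast
qed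

lemma sup_double:
  assumes "\<And>l. P l \<Longrightarrow> Q (2*l)"
  shows "2 * Sup {enat l | l. P l} \<le> Sup {enat l | l. Q l}"
proof (cases "finite {enat l | l. P l}")
  case fin: True
  show ?thesis
  proof (cases "{enat l | l. P l} = {}")
    case True then show ?thesis by (simp add: Sup_enat_def)
  next
    case False
    have "Max {enat l | l. P l} \<in> {enat l | l. P l}" using fin False by (rule Max_in)
    then obtain l where l: "Max {enat l | l. P l} = enat l" "P l" by blast
    have "Sup {enat l | l. P l} = Max {enat l | l. P l}"
      by (rule Sup_enat_def[THEN trans]) (simp only: if_not_P[OF False] if_P[OF fin])
    then have "Sup {enat l | l. P l} = enat l" using l(1) by simp
    moreover have "enat (2*l) \<le> Sup {enat l | l. Q l}"
      using assms[OF l(2)] by (intro Sup_upper) blast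
    ultimately show ?thesis by (simp add: numeral_eq_enat)
  qed
next
  case inf: False
  have big: "\<exists>l\<ge>n. P l" for n
  proof (rule ccontr)
    assume "\<not> ?thesis"
    then have "{enat l | l. P l} \<subseteq> enat ` {..<n}" by (auto simp: not_le)
    then have "finite {enat l | l. P l}" by (rule finite_subset) simp
    with inf show False by simp
  qed
  have le: "enat n \<le> Sup {enat l | l. Q l}" for n
  proof -
    obtain l where "l \<ge> n" "P l" using big by blast
    then have "enat (2*l) \<le> Sup {enat l | l. Q l}" using assms by (intro Sup_upper) blast
    moreover have "enat n \<le> enat (2*l)" using \<open>l \<ge> n\<close> by simp
    ultimately show ?thesis by (rule order_trans[rotated])
  qed
  have "Sup {enat l | l. Q l} = \<infinity>"
  proof (rule ccontr)
    assume "Sup {enat l | l. Q l} \<noteq> \<infinity>"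
    then obtain m where "Sup {enat l | l. Q l} = enat m" by auto
    with le[of "Suc m"] show False by simp
  qed
  then show ?thesis by simp
qed

theorem lemmaA1:
  fixes step :: "'s::finite \<Rightarrow> 'a::finite \<Rightarrow> 's"
    and pol :: "nat \<Rightarrow> 's \<Rightarrow> 's \<Rightarrow> 'a pmf"
    and V :: "nat \<Rightarrow> 's \<Rightarrow> 's \<Rightarrow> real"
    and sub :: "nat \<Rightarrow> 's \<Rightarrow> 's \<Rightarrow> 's"
    and k :: nat
  assumes init: "\<forall>s a. pmf (pol 0 s (step s a)) a = 1"
    and V_range: "\<forall>j\<ge>1. \<forall>x y. 0 \<le> V j x y \<and> V j x y \<le> 1"
    and V_one: "\<forall>j\<ge>1. \<forall>x y. V j x y = 1 \<longleftrightarrow> reaches step (pol (j - 1)) x y"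
    and sub_max: "\<forall>j\<ge>1. \<forall>s g s''.
                    V j s s'' * V j s'' g \<le> V j s (sub j s g) * V j (sub j s g) g"
    and learn_direct: "\<forall>j\<ge>1. \<forall>s g. reaches step (pol (j - 1)) s g \<longrightarrow> reaches step (pol j) s g"
    and learn_reduce: "\<forall>j\<ge>1. \<forall>s g. \<not> reaches step (pol (j - 1)) s g
                         \<and> comp_reaches step (pol (j - 1)) s (sub j s g) g
                         \<longrightarrow> reaches step (pol j) s g"
    and k: "k \<ge> 1"
  shows "ell step (pol k) \<ge> 2 * ell step (pol (k - 1))"
proof -
  let ?q = "pol (k - 1)"
  have main: "\<forall>s g. dist_mdp step s g \<le> enat (2*L) \<longrightarrow> reaches step (pol k) s g"
    if PL: "\<forall>s g. dist_mdp step s g \<le> enat L \<longrightarrow> reaches step ?q s g" for L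
  proof (intro allI impI)
    fix s g assume d: "dist_mdp step s g \<le> enat (2*L)"
    obtain t x where t: "t \<le> 2*L" "x 0 = s" "x t = g" "pathf step x t"
      using dist_path[OF d] by blast
    define j where "j = min t L"
    have p1: "pathf step x j" using t(4) by (auto simp: pathf_def j_def)
    have p2: "pathf step (\<lambda>i. x (i + j)) (t - j)"
      unfolding pathf_def
    proof (intro allI impI)
      fix i assume "i < t - j"
      then have "i + j < t" by simp
      then show "\<exists>a. x (Suc i + j) = step (x (i + j)) a" using t(4) unfolding pathf_def by simp
    qed
    have "dist_mdp step s (x j) \<le> enat L"
      using path_dist[OF p1] t(2) by (simp add: j_def) (metis enat_ord_simps(1) min.cobounded2 order_trans)
    then have r1: "reaches step ?q s (x j)" using PL by blast
    have "dist_mdp step (x j) g \<le> enat L"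
    proof -
      have "t - j + j = t" by (simp add: j_def)
      then have "dist_mdp step (x j) g \<le> enat (t - j)"
        using path_dist[OF p2] t(3) by simp
      moreover have "t - j \<le> L" using t(1) by (simp add: j_def)
      ultimately show ?thesis by (metis enat_ord_simps(1) order_trans)
    qed
    then have r2: "reaches step ?q (x j) g" using PL by blast
    let ?m = "sub k s g"
    have V1: "V k s (x j) = 1" "V k (x j) g = 1" using V_one k r1 r2 by auto
    have "V k s (x j) * V k (x j) g \<le> V k s ?m * V k ?m g" using sub_max k by blast
    then have prod: "1 \<le> V k s ?m * V k ?m g" using V1 by simp
    have ra: "0 \<le> V k s ?m" "V k s ?m \<le> 1" "0 \<le> V k ?m g" "V k ?m g \<le> 1"
      using V_range k by auto
    have "V k s ?m * V k ?m g \<le> V k s ?m" using ra by (intro mult_left_le) auto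
    moreover have "V k s ?m * V k ?m g \<le> V k ?m g" using ra by (intro mult_left_le_one_le) auto
    ultimately have "V k s ?m = 1" "V k ?m g = 1" using prod ra by linarith+
    then have "reaches step ?q s ?m" "reaches step ?q ?m g" using V_one k by auto
    then have c: "comp_reaches step ?q s ?m g" by (rule comp_reaches_lemma)
    show "reaches step (pol k) s g"
    proof (cases "reaches step ?q s g")
      case True then show ?thesis using learn_direct k by blast
    next
      case False then show ?thesis using learn_reduce k c by blast
    qed
  qed
  show ?thesis unfolding ell_def
    by (rule sup_double) (rule main)
qed

end
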